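(* Let $\mathcal C=(A,\bar A,B,\bar B,C,\bar C,D,\bar D,E,\bar E,F,\bar F)$ be a coefficient tuple and $\mathcal W=(Q,\bar Q,S,\bar S,R,\bar R,G,\bar G)$ a weight tuple. For any $H,K\in\Phi$, the existence and uniqueness of solutions of the Riccati systems $\mathrm{Ric}(\mathcal C,\mathcal W^{HK})$ are equivalent; in particular, for every $H,K\in\Phi$, $\mathrm{Ric}(\mathcal C,\mathcal W^{HK})$ admits a solution if and only if $\mathrm{Ric}(\mathcal C,\mathcal W)$ admits a solution, and its solution is unique if and only if the solution of $\mathrm{Ric}(\mathcal C,\mathcal W)$ is unique.
   Context: Fix $T>0$, integers $n,m\ge1$, a nonempty $\Theta\subseteq\mathbb R\setminus\{0\}$ and a $\sigma$-finite measure $\nu$ on $\Theta$ with $\int_\Theta(1\wedge\theta^2)\nu(d\theta)<\infty$. $\mathbb S^k$: symmetric $k\times k$ matrices. $L^\infty(0,T;M)$: bounded functions; $L^2_\nu(M)$: deterministic $r:[0,T]\times\Theta\to M$ with $\sup_t\int_\Theta|r(t,\theta)|^2\nu(d\theta)<\infty$. A coefficient tuple $\mathcal C=(A,\bar A,B,\bar B,C,\bar C,D,\bar D,E,\bar E,F,\bar F)$: deterministic $A,\bar A,C,\bar C\in L^\infty(0,T;\mathbb R^{n\times n})$, $B,\bar B,D,\bar D\in L^\infty(0,T;\mathbb R^{n\times m})$, $E,\bar E\in L^2_\nu(\mathbb R^{n\times n})$, $F,\bar F\in L^2_\nu(\mathbb R^{n\times m})$. A weight tuple $\mathcal W=(Q,\bar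 Q,S,\bar S,R,\bar R,G,\bar G)$: $Q,\bar Q\in L^\infty(0,T;\mathbb S^n)$, $R,\bar R\in L^\infty(0,T;\mathbb S^m)$, $S,\bar S\in L^\infty(0,T;\mathbb R^{n\times m})$, $G,\bar G\in\mathbb S^n$. Riccati system $\mathrm{Ric}(\mathcal C,\mathcal W)$: for deterministic $P,\Pi:[0,T]\to\mathbb S^n$, with $\Sigma_{0t}=R_t+D_t^\top P_tD_t+\int_\Theta F_{t,\theta}^\top P_tF_{t,\theta}\nu(d\theta)$, $\Sigma_{1t}=R_t+\bar R_t+(D_t+\bar D_t)^\top P_t(D_t+\bar D_t)+\int_\Theta(F_{t,\theta}+\bar F_{t,\theta})^\top P_t(F_{t,\theta}+\bar F_{t,\theta})\nu(d\theta)$ (invertible): $\dot P_t+P_tA_t+A_t^\top P_t+C_t^\top P_tC_t+\int_\Theta E_{t,\theta}^\top P_tE_{t,\theta}\nu(d\theta)+Q_t-\big(S_t+P_tB_t+C_t^\top P_tD_t+\int_\Theta E_{t,\theta}^\top P_tF_{t,\theta}\nu(d\theta)\big)\Sigma_{0t}^{-1}\big(S_t^\top+B_t^\top P_t+D_t^\top P_tC_t+\int_\Theta F_{t,\theta}^\top P_tE_{t,\theta}\nu(d\theta)\big)=0$, $P_T=G$; $\dot\Pi_t+\Pi_t(A_t+\bar A_t)+(A_t+\bar A_t)^\top\Pi_t+(C_t+\bar C_t)^\top P_t(C_t+\bar C_t)+\int_\Theta(E_{t,\theta}+\bar E_{t,\theta})^\top P_t(E_{t,\theta}+\bar E_{t,\theta})\nu(d\theta)+Q_t+\bar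 Q_t-\big[(S_t+\bar S_t)+\Pi_t(B_t+\bar B_t)+(C_t+\bar C_t)^\top P_t(D_t+\bar D_t)+\int_\Theta(E_{t,\theta}+\bar E_{t,\theta})^\top P_t(F_{t,\theta}+\bar F_{t,\theta})\nu(d\theta)\big]\Sigma_{1t}^{-1}\big[(S_t+\bar S_t)^\top+(B_t+\bar B_t)^\top\Pi_t+(D_t+\bar D_t)^\top P_t(C_t+\bar C_t)+\int_\Theta(F_{t,\theta}+\bar F_{t,\theta})^\top P_t(E_{t,\theta}+\bar E_{t,\theta})\nu(d\theta)\big]=0$, $\Pi_T=G+\bar G$. (For a weight tuple with components marked $HK$, the same system with each weight replaced accordingly.) $\Phi$ is the set of deterministic continuously differentiable bounded functions $[0,T]\to\mathbb S^n$. For $H,K\in\Phi$, $\mathcal W^{HK}=(Q^{HK},\bar Q^{HK},S^{HK},\bar S^{HK},R^{HK},\bar R^{HK},G^{HK},\bar G^{HK})$ is defined by $Q^{HK}_t=Q_t+\dot H_t+H_tA_t+A_t^\top H_t+C_t^\top H_tC_t+\int_\Theta E_{t,\theta}^\top H_tE_{t,\theta}\nu(d\theta)$, $S^{HK}_t=S_t+H_tB_t+C_t^\top H_tD_t+\int_\Theta E_{t,\theta}^\top H_tF_{t,\theta}\nu(d\theta)$, $R^{HK}_t=R_t+D_t^\top H_tD_t+\int_\Theta F_{t,\theta}^\top H_tF_{t,\theta}\nu(d\theta)$, $G^{HK}=G-H_T$, and $\bar Q^{HK},\bar S^{HK},\bar R^{HK},\bar G^{HK}$ determined by $Q^{HK}_t+\bar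 Q^{HK}_t=Q_t+\bar Q_t+\dot K_t+K_t(A_t+\bar A_t)+(A_t+\bar A_t)^\top K_t+(C_t+\bar C_t)^\top H_t(C_t+\bar C_t)+\int_\Theta(E_{t,\theta}+\bar E_{t,\theta})^\top H_t(E_{t,\theta}+\bar E_{t,\theta})\nu(d\theta)$, $S^{HK}_t+\bar S^{HK}_t=S_t+\bar S_t+K_t(B_t+\bar B_t)+(C_t+\bar C_t)^\top H_t(D_t+\bar D_t)+\int_\Theta(E_{t,\theta}+\bar E_{t,\theta})^\top H_t(F_{t,\theta}+\bar F_{t,\theta})\nu(d\theta)$, $R^{HK}_t+\bar R^{HK}_t=R_t+\bar R_t+(D_t+\bar D_t)^\top H_t(D_t+\bar D_t)+\int_\Theta(F_{t,\theta}+\bar F_{t,\theta})^\top H_t(F_{t,\theta}+\bar F_{t,\theta})\nu(d\theta)$, $G^{HK}+\bar G^{HK}=G+\bar G-K_T$. Note $\mathcal W^{00}=\mathcal W$. *)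

theory Defs
  imports "HOL-Analysis.Analysis"
begin

text \<open>An n x m real matrix is  real^'m^'n  (rows indexed by 'n, columns by 'm).
  Time-dependent coefficients are functions of real time (only [0,T] matters);
  jump coefficients additionally take the jump size theta.\<close>

record ('n::finite, 'm::finite) coef =
  cA  :: "real \<Rightarrow> real^'n^'n"
  cAb :: "real \<Rightarrow> real^'n^'n"
  cB  :: "real \<Rightarrow> real^'m^'n"
  cBb :: "real \<Rightarrow> real^'m^'n"
  cC  :: "real \<Rightarrow> real^'n^'n"
  cCb :: "real \<Rightarrow> real^'n^'n"
  cD  :: "real \<Rightarrow> real^'m^'n"
  cDb :: "real \<Rightarrow> real^'m^'n"
  cE  :: "real \<Rightarrow> real \<Rightarrow> real^'n^'n"
  cEb :: "real \<Rightarrow> real \<Rightarrow> real^'n^'n"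
  cF  :: "real \<Rightarrow> real \<Rightarrow> real^'m^'n"
  cFb :: "real \<Rightarrow> real \<Rightarrow> real^'m^'n"

record ('n::finite, 'm::finite) weight =
  wQ  :: "real \<Rightarrow> real^'n^'n"
  wQb :: "real \<Rightarrow> real^'n^'n"
  wS  :: "real \<Rightarrow> real^'m^'n"
  wSb :: "real \<Rightarrow> real^'m^'n"
  wR  :: "real \<Rightarrow> real^'m^'m"
  wRb :: "real \<Rightarrow> real^'m^'m"
  wG  :: "real^'n^'n"
  wGb :: "real^'n^'n"

definition symm :: "real^'k^'k \<Rightarrow> bool" where
  "symm M \<longleftrightarrow> transpose M = M"

definition levy_ok :: "real set \<Rightarrow> real measure \<Rightarrow> bool" where
  "levy_ok \<Theta> \<nu> \<longleftrightarrow> \<Theta> \<noteq> {} \<and> \<Theta> \<subseteq> - {0} \<and>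
     sets \<nu> = sets (restrict_space borel \<Theta>) \<and> sigma_finite_measure \<nu> \<and>
     integrable \<nu> (\<lambda>\<theta>. min 1 (\<theta>\<^sup>2))"

definition Linf :: "real \<Rightarrow> (real \<Rightarrow> 'a::euclidean_space) \<Rightarrow> bool" where
  "Linf T f \<longleftrightarrow> set_borel_measurable lborel {0..T} f \<and> bounded (f ` {0..T})"

definition L2nu :: "real \<Rightarrow> real measure \<Rightarrow> (real \<Rightarrow> real \<Rightarrow> 'a::euclidean_space) \<Rightarrow> bool" where
  "L2nu T \<nu> r \<longleftrightarrow>
     (\<forall>t\<in>{0..T}. r t \<in> borel_measurable \<nu> \<and> integrable \<nu> (\<lambda>\<theta>. (norm (r t \<theta>))\<^sup>2)) \<and>
     bdd_above ((\<lambda>t. \<integral>\<theta>. (norm (r t \<theta>))\<^sup>2 \<partial>\<nu>) ` {0..T})"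

definition coef_ok :: "real \<Rightarrow> real measure \<Rightarrow> ('n::finite,'m::finite) coef \<Rightarrow> bool" where
  "coef_ok T \<nu> c \<longleftrightarrow>
     Linf T (cA c) \<and> Linf T (cAb c) \<and> Linf T (cC c) \<and> Linf T (cCb c) \<and>
     Linf T (cB c) \<and> Linf T (cBb c) \<and> Linf T (cD c) \<and> Linf T (cDb c) \<and>
     L2nu T \<nu> (cE c) \<and> L2nu T \<nu> (cEb c) \<and> L2nu T \<nu> (cF c) \<and> L2nu T \<nu> (cFb c)"

definition weight_ok :: "real \<Rightarrow> ('n::finite,'m::finite) weight \<Rightarrow> bool" where
  "weight_ok T w \<longleftrightarrow>
     Linf T (wQ w) \<and> Linf T (wQb w) \<and> Linf T (wS w) \<and> Linf T (wSb w) \<and>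
     Linf T (wR w) \<and> Linf T (wRb w) \<and>
     (\<forall>t\<in>{0..T}. symm (wQ w t) \<and> symm (wQb w t) \<and> symm (wR w t) \<and> symm (wRb w t)) \<and>
     symm (wG w) \<and> symm (wGb w)"

definition dot :: "real \<Rightarrow> (real \<Rightarrow> real^'n^'n) \<Rightarrow> real \<Rightarrow> real^'n^'n" where
  "dot T H t = vector_derivative H (at t within {0..T})"

definition in_Phi :: "real \<Rightarrow> (real \<Rightarrow> real^'n^'n) \<Rightarrow> bool" where
  "in_Phi T H \<longleftrightarrow> (\<forall>t\<in>{0..T}. H differentiable (at t within {0..T})) \<and>
     continuous_on {0..T} (dot T H) \<and> bounded (H ` {0..T}) \<and>
     (\<forall>t\<in>{0..T}. symm (H t))"

definition Sig0 :: "real measure \<Rightarrow> ('n::finite,'m::finite) coef \<Rightarrow> ('n,'m) weight \<Rightarrow> real \<Rightarrow> real^'n^'n \<Rightarrow> real^'m^'m" where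
  "Sig0 \<nu> c w t P = wR w t + transpose (cD c t) ** P ** cD c t
     + (\<integral>\<theta>. transpose (cF c t \<theta>) ** P ** cF c t \<theta> \<partial>\<nu>)"

definition Sig1 :: "real measure \<Rightarrow> ('n::finite,'m::finite) coef \<Rightarrow> ('n,'m) weight \<Rightarrow> real \<Rightarrow> real^'n^'n \<Rightarrow> real^'m^'m" where
  "Sig1 \<nu> c w t P = wR w t + wRb w t
     + transpose (cD c t + cDb c t) ** P ** (cD c t + cDb c t)
     + (\<integral>\<theta>. transpose (cF c t \<theta> + cFb c t \<theta>) ** P ** (cF c t \<theta> + cFb c t \<theta>) \<partial>\<nu>)"

text \<open>Right-hand sides: the P-equation reads  dP/dt + ricP(t,P) = 0.\<close>
definition ricP :: "real measure \<Rightarrow> ('n::finite,'m::finite) coef \<Rightarrow> ('n,'m) weight \<Rightarrow> real \<Rightarrow> real^'n^'n \<Rightarrow> real^'n^'n" where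
  "ricP \<nu> c w t P =
     P ** cA c t + transpose (cA c t) ** P + transpose (cC c t) ** P ** cC c t
     + (\<integral>\<theta>. transpose (cE c t \<theta>) ** P ** cE c t \<theta> \<partial>\<nu>) + wQ w t
     - (wS w t + P ** cB c t + transpose (cC c t) ** P ** cD c t
          + (\<integral>\<theta>. transpose (cE c t \<theta>) ** P ** cF c t \<theta> \<partial>\<nu>))
       ** matrix_inv (Sig0 \<nu> c w t P)
       ** (transpose (wS w t) + transpose (cB c t) ** P + transpose (cD c t) ** P ** cC c t
          + (\<integral>\<theta>. transpose (cF c t \<theta>) ** P ** cE c t \<theta> \<partial>\<nu>))"

text \<open>The Pm-equation reads  dPi/dt + ricPi(t,P,Pm) = 0.\<close>
definition ricPi :: "real measure \<Rightarrow> ('n::finite,'m::finite) coef \<Rightarrow> ('n,'m) weight \<Rightarrow> real \<Rightarrow> real^'n^'n \<Rightarrow> real^'n^'n \<Rightarrow> real^'n^'n" where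
  "ricPi \<nu> c w t P Pm =
     (let A1 = cA c t + cAb c t; B1 = cB c t + cBb c t; C1 = cC c t + cCb c t;
          D1 = cD c t + cDb c t; E1 = (\<lambda>\<theta>. cE c t \<theta> + cEb c t \<theta>);
          F1 = (\<lambda>\<theta>. cF c t \<theta> + cFb c t \<theta>); S1 = wS w t + wSb w t in
      Pm ** A1 + transpose A1 ** Pm + transpose C1 ** P ** C1
      + (\<integral>\<theta>. transpose (E1 \<theta>) ** P ** E1 \<theta> \<partial>\<nu>) + wQ w t + wQb w t
      - (S1 + Pm ** B1 + transpose C1 ** P ** D1
           + (\<integral>\<theta>. transpose (E1 \<theta>) ** P ** F1 \<theta> \<partial>\<nu>))
        ** matrix_inv (Sig1 \<nu> c w t P)
        ** (transpose S1 + transpose B1 ** Pm + transpose D1 ** P ** C1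
           + (\<integral>\<theta>. transpose (F1 \<theta>) ** P ** E1 \<theta> \<partial>\<nu>)))"

definition ric_sol :: "real measure \<Rightarrow> real \<Rightarrow> ('n::finite,'m::finite) coef \<Rightarrow> ('n,'m) weight
     \<Rightarrow> (real \<Rightarrow> real^'n^'n) \<Rightarrow> (real \<Rightarrow> real^'n^'n) \<Rightarrow> bool" where
  "ric_sol \<nu> T c w P Pm \<longleftrightarrow>
     (\<forall>t\<in>{0..T}. symm (P t) \<and> symm (Pm t) \<and>
        invertible (Sig0 \<nu> c w t (P t)) \<and> invertible (Sig1 \<nu> c w t (P t)) \<and>
        ((\<lambda>s. ricP \<nu> c w s (P s)) has_integral (P t - wG w)) {t..T} \<and>
        ((\<lambda>s. ricPi \<nu> c w s (P s) (Pm s)) has_integral (Pm t - (wG w + wGb w))) {t..T})"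

definition ric_solvable :: "real measure \<Rightarrow> real \<Rightarrow> ('n::finite,'m::finite) coef \<Rightarrow> ('n,'m) weight \<Rightarrow> bool" where
  "ric_solvable \<nu> T c w \<longleftrightarrow> (\<exists>P Pm. ric_sol \<nu> T c w P Pm)"

definition ric_unique :: "real measure \<Rightarrow> real \<Rightarrow> ('n::finite,'m::finite) coef \<Rightarrow> ('n,'m) weight \<Rightarrow> bool" where
  "ric_unique \<nu> T c w \<longleftrightarrow>
     (\<forall>P Pm P' Pm'. ric_sol \<nu> T c w P Pm \<and> ric_sol \<nu> T c w P' Pm' \<longrightarrow>
        (\<forall>t\<in>{0..T}. P t = P' t \<and> Pm t = Pm' t))"

definition weightHK :: "real measure \<Rightarrow> real \<Rightarrow> ('n::finite,'m::finite) coef \<Rightarrow> ('n,'m) weight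
     \<Rightarrow> (real \<Rightarrow> real^'n^'n) \<Rightarrow> (real \<Rightarrow> real^'n^'n) \<Rightarrow> ('n,'m) weight" where
  "weightHK \<nu> T c w H K =
    (let QH = (\<lambda>t. wQ w t + dot T H t + H t ** cA c t + transpose (cA c t) ** H t
                 + transpose (cC c t) ** H t ** cC c t
                 + (\<integral>\<theta>. transpose (cE c t \<theta>) ** H t ** cE c t \<theta> \<partial>\<nu>));
         SH = (\<lambda>t. wS w t + H t ** cB c t + transpose (cC c t) ** H t ** cD c t
                 + (\<integral>\<theta>. transpose (cE c t \<theta>) ** H t ** cF c t \<theta> \<partial>\<nu>));
         RH = (\<lambda>t. wR w t + transpose (cD c t) ** H t ** cD c t
                 + (\<integral>\<theta>. transpose (cF c t \<theta>) ** H t ** cF c t \<theta> \<partial>\<nu>));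
         GH = wG w - H T;
         A1 = (\<lambda>t. cA c t + cAb c t); B1 = (\<lambda>t. cB c t + cBb c t);
         C1 = (\<lambda>t. cC c t + cCb c t); D1 = (\<lambda>t. cD c t + cDb c t);
         E1 = (\<lambda>t \<theta>. cE c t \<theta> + cEb c t \<theta>); F1 = (\<lambda>t \<theta>. cF c t \<theta> + cFb c t \<theta>);
         QHsum = (\<lambda>t. wQ w t + wQb w t + dot T K t + K t ** A1 t + transpose (A1 t) ** K t
                 + transpose (C1 t) ** H t ** C1 t
                 + (\<integral>\<theta>. transpose (E1 t \<theta>) ** H t ** E1 t \<theta> \<partial>\<nu>));
         SHsum = (\<lambda>t. wS w t + wSb w t + K t ** B1 t + transpose (C1 t) ** H t ** D1 t
                 + (\<integral>\<theta>. transpose (E1 t \<theta>) ** H t ** F1 t \<theta> \<partial>\<nu>));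
         RHsum = (\<lambda>t. wR w t + wRb w t + transpose (D1 t) ** H t ** D1 t
                 + (\<integral>\<theta>. transpose (F1 t \<theta>) ** H t ** F1 t \<theta> \<partial>\<nu>));
         GHsum = wG w + wGb w - K T
     in \<lparr> wQ = QH, wQb = (\<lambda>t. QHsum t - QH t),
          wS = SH, wSb = (\<lambda>t. SHsum t - SH t),
          wR = RH, wRb = (\<lambda>t. RHsum t - RH t),
          wG = GH, wGb = GHsum - GH \<rparr>)"

end

theory Submission imports Defs begin

lemma mrd_add: "((A::real^'a^'b) + B) ** C = A ** C + B ** C"
  by (vector matrix_matrix_mult_def sum.distrib[symmetric] field_simps)
lemma mrd_sub: "((A::real^'a^'b) - B) ** C = A ** C - B ** C"
  by (vector matrix_matrix_mult_def sum_subtractf[symmetric] field_simps)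
lemma mld_sub: "(A::real^'a^'b) ** (B - C) = A ** B - A ** C"
  by (vector matrix_matrix_mult_def sum_subtractf[symmetric] field_simps)
lemma tr_add: "transpose ((A::real^'a^'b) + B) = transpose A + transpose B"
  by (vector transpose_def)
lemma tr_sub: "transpose ((A::real^'a^'b) - B) = transpose A - transpose B"
  by (vector transpose_def)
lemma m_scaleR_r: "(A::real^'a^'b) ** (k *\<^sub>R B) = k *\<^sub>R (A ** B)"
  by (simp add: matrix_scalar_ac scalar_matrix_assoc)

lemma bil: "bilinear (\<lambda>(X::real^'a^'b) (Y::real^'c^'b). transpose X ** (M::real^'b^'b) ** Y)"
  unfolding bilinear_def
  by (auto intro!: linearI simp: tr_add matrix_add_ldistrib mrd_add transpose_scalar
       m_scaleR_r scalar_matrix_assoc)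

lemma lin_tr: "bounded_linear (transpose :: real^'a^'b \<Rightarrow> real^'b^'a)"
  by (auto intro!: linearI simp: linear_conv_bounded_linear[symmetric] tr_add transpose_scalar)

definition good :: "real measure \<Rightarrow> (real \<Rightarrow> real^'a^'b) \<Rightarrow> bool" where
  "good \<nu> X \<longleftrightarrow> X \<in> borel_measurable \<nu> \<and> integrable \<nu> (\<lambda>\<theta>. (norm (X \<theta>))\<^sup>2)"

lemma good_add: assumes "good \<nu> X" "good \<nu> Y" shows "good \<nu> (\<lambda>\<theta>. X \<theta> + Y \<theta>)"
proof -
  have m: "X \<in> borel_measurable \<nu>" "Y \<in> borel_measurable \<nu>" using assms by (auto simp: good_def)
  have i: "integrable \<nu> (\<lambda>\<theta>. 2 * (norm (X \<theta>))\<^sup>2 + 2 * (norm (Y \<theta>))\<^sup>2)"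
    using assms by (auto simp: good_def)
  have "integrable \<nu> (\<lambda>\<theta>. (norm (X \<theta> + Y \<theta>))\<^sup>2)"
  proof (rule Bochner_Integration.integrable_bound[OF i])
    show "(\<lambda>\<theta>. (norm (X \<theta> + Y \<theta>))\<^sup>2) \<in> borel_measurable \<nu>" using m by measurable
    show "AE x in \<nu>. norm ((norm (X x + Y x))\<^sup>2) \<le> norm (2 * (norm (X x))\<^sup>2 + 2 * (norm (Y x))\<^sup>2)"
    proof (rule AE_I2)
      fix x
      have a: "norm (X x + Y x) \<le> norm (X x) + norm (Y x)" by (rule norm_triangle_ineq)
      have "(norm (X x + Y x))\<^sup>2 \<le> (norm (X x) + norm (Y x))\<^sup>2"
        using a by (simp add: power_mono)
      also have "\<dots> \<le> 2 * (norm (X x))\<^sup>2 + 2 * (norm (Y x))\<^sup>2"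
        using zero_le_power2[of "norm (X x) - norm (Y x)"] unfolding power2_sum power2_diff by linarith
      finally show "norm ((norm (X x + Y x))\<^sup>2) \<le> norm (2 * (norm (X x))\<^sup>2 + 2 * (norm (Y x))\<^sup>2)"
        by simp
    qed
  qed
  then show ?thesis using m by (auto simp: good_def)
qed

lemma int_good:
  fixes X :: "real \<Rightarrow> real^'a^'b" and Y :: "real \<Rightarrow> real^'c^'b"
  assumes "good \<nu> X" "good \<nu> Y"
  shows "integrable \<nu> (\<lambda>\<theta>. transpose (X \<theta>) ** M ** Y \<theta>)"
proof -
  have m: "X \<in> borel_measurable \<nu>" "Y \<in> borel_measurable \<nu>" using assms by (auto simp: good_def)
  have bb: "bounded_bilinear (\<lambda>(X::real^'a^'b) (Y::real^'c^'b). transpose X ** M ** Y)"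
    using bil bilinear_conv_bounded_bilinear by blast
  obtain K where K: "K \<ge> 0" "\<forall>(a::real^'a^'b) (b::real^'c^'b). norm (transpose a ** M ** b) \<le> norm a * norm b * K"
    using bounded_bilinear.nonneg_bounded[OF bb] by blast
  have i: "integrable \<nu> (\<lambda>\<theta>. K * (norm (X \<theta>))\<^sup>2 + K * (norm (Y \<theta>))\<^sup>2)"
    using assms by (auto simp: good_def)
  show ?thesis
  proof (rule Bochner_Integration.integrable_bound[OF i])
    have c: "continuous_on UNIV (\<lambda>x. transpose (fst x) ** M ** (snd x :: real^'c^'b))"
      by (rule bilinear_continuous_on_compose[OF continuous_on_fst continuous_on_snd bil])
         (auto intro: continuous_on_id)
    show "(\<lambda>\<theta>. transpose (X \<theta>) ** M ** Y \<theta>) \<in> borel_measurable \<nu>"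
      by (rule borel_measurable_continuous_Pair[OF m c])
    show "AE x in \<nu>. norm (transpose (X x) ** M ** Y x) \<le> norm (K * (norm (X x))\<^sup>2 + K * (norm (Y x))\<^sup>2)"
    proof (rule AE_I2)
      fix x
      have "norm (transpose (X x) ** M ** Y x) \<le> norm (X x) * norm (Y x) * K" using K(2) by blast
      also have "\<dots> \<le> K * (norm (X x))\<^sup>2 + K * (norm (Y x))\<^sup>2"
      proof -
        have "norm (X x) * norm (Y x) \<le> (norm (X x))\<^sup>2 + (norm (Y x))\<^sup>2"
          using zero_le_power2[of "norm (X x) - norm (Y x)"] mult_nonneg_nonneg[OF norm_ge_zero norm_ge_zero, of "X x" "Y x"]
          unfolding power2_diff by linarith
        then have "norm (X x) * norm (Y x) * K \<le> ((norm (X x))\<^sup>2 + (norm (Y x))\<^sup>2) * K"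
          using K(1) by (rule mult_right_mono)
        then show ?thesis by (simp add: algebra_simps)
      qed
      finally show "norm (transpose (X x) ** M ** Y x) \<le> norm (K * (norm (X x))\<^sup>2 + K * (norm (Y x))\<^sup>2)"
        using K(1) by simp
    qed
  qed
qed

lemma int_sub:
  fixes X :: "real \<Rightarrow> real^'a^'b" and Y :: "real \<Rightarrow> real^'c^'b"
  assumes "good \<nu> X" "good \<nu> Y"
  shows "(\<integral>\<theta>. transpose (X \<theta>) ** (M - N) ** Y \<theta> \<partial>\<nu>) =
     (\<integral>\<theta>. transpose (X \<theta>) ** M ** Y \<theta> \<partial>\<nu>) - (\<integral>\<theta>. transpose (X \<theta>) ** N ** Y \<theta> \<partial>\<nu>)"
  by (simp add: mld_sub mrd_sub Bochner_Integration.integral_diff[OF int_good[OF assms] int_good[OF assms]])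

lemma int_tr:
  fixes X :: "real \<Rightarrow> real^'a^'b" and Y :: "real \<Rightarrow> real^'c^'b"
  assumes "good \<nu> X" "good \<nu> Y"
  shows "transpose (\<integral>\<theta>. transpose (X \<theta>) ** M ** Y \<theta> \<partial>\<nu>) =
     (\<integral>\<theta>. transpose (Y \<theta>) ** transpose M ** X \<theta> \<partial>\<nu>)"
proof -
  have "has_bochner_integral \<nu> (\<lambda>\<theta>. transpose (transpose (X \<theta>) ** M ** Y \<theta>))
      (transpose (\<integral>\<theta>. transpose (X \<theta>) ** M ** Y \<theta> \<partial>\<nu>))"
    by (rule has_bochner_integral_bounded_linear[OF lin_tr has_bochner_integral_integrable[OF int_good[OF assms]]])
  then show ?thesis
    by (simp add: has_bochner_integral_iff matrix_transpose_mul matrix_mul_assoc)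
qed

lemma pw:
  fixes c :: "('n::finite,'m::finite) coef"
  assumes gE: "good \<nu> (cE c t)" and gEb: "good \<nu> (cEb c t)"
    and gF: "good \<nu> (cF c t)" and gFb: "good \<nu> (cFb c t)"
    and sH: "transpose (H t) = H t" and sK: "transpose (K t) = K t"
  shows "Sig0 \<nu> c (weightHK \<nu> T c w H K) t (P - H t) = Sig0 \<nu> c w t P"
    and "Sig1 \<nu> c (weightHK \<nu> T c w H K) t (P - H t) = Sig1 \<nu> c w t P"
    and "ricP \<nu> c (weightHK \<nu> T c w H K) t (P - H t) = ricP \<nu> c w t P + dot T H t"
    and "ricPi \<nu> c (weightHK \<nu> T c w H K) t (P - H t) (Pm - K t) = ricPi \<nu> c w t P Pm + dot T K t"
proof -
  have gE1: "good \<nu> (\<lambda>\<theta>. cE c t \<theta> + cEb c t \<theta>)" by (rule good_add[OF gE gEb])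
  have gF1: "good \<nu> (\<lambda>\<theta>. cF c t \<theta> + cFb c t \<theta>)" by (rule good_add[OF gF gFb])
  note gs = gE gEb gF gFb gE1 gF1
  show s0: "Sig0 \<nu> c (weightHK \<nu> T c w H K) t (P - H t) = Sig0 \<nu> c w t P"
    unfolding Sig0_def
    apply (simp only: int_sub gs)
    apply (simp add: weightHK_def Let_def mld_sub mrd_sub)
    done
  show s1: "Sig1 \<nu> c (weightHK \<nu> T c w H K) t (P - H t) = Sig1 \<nu> c w t P"
    unfolding Sig1_def
    apply (simp only: int_sub gs)
    apply (simp add: weightHK_def Let_def mld_sub mrd_sub)
    done
  show "ricP \<nu> c (weightHK \<nu> T c w H K) t (P - H t) = ricP \<nu> c w t P + dot T H t"
    unfolding ricP_def s0
    apply (simp only: int_sub gs)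
    apply (simp add: weightHK_def Let_def)
    apply (simp only: int_tr gs tr_add tr_sub matrix_transpose_mul sH transpose_transpose)
    apply (simp add: mld_sub mrd_sub mrd_add matrix_add_ldistrib matrix_mul_assoc algebra_simps)
    done
  show "ricPi \<nu> c (weightHK \<nu> T c w H K) t (P - H t) (Pm - K t) = ricPi \<nu> c w t P Pm + dot T K t"
  proof -
    have t1: "transpose (\<integral>\<theta>. transpose (cE c t \<theta> + cEb c t \<theta>) ** H t ** (cF c t \<theta> + cFb c t \<theta>) \<partial>\<nu>)
      = (\<integral>\<theta>. transpose (cF c t \<theta> + cFb c t \<theta>) ** H t ** (cE c t \<theta> + cEb c t \<theta>) \<partial>\<nu>)"
      using int_tr[OF gE1 gF1, of "H t"] sH by simp
    have t1': "transpose (\<integral>\<theta>. (transpose (cE c t \<theta>) + transpose (cEb c t \<theta>)) ** H t ** (cF c t \<theta> + cFb c t \<theta>) \<partial>\<nu>)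
      = (\<integral>\<theta>. (transpose (cF c t \<theta>) + transpose (cFb c t \<theta>)) ** H t ** (cE c t \<theta> + cEb c t \<theta>) \<partial>\<nu>)"
      using t1 by (simp add: tr_add)
    show ?thesis
    unfolding ricPi_def s1 Let_def
    apply (simp only: int_sub gs)
    apply (simp add: weightHK_def Let_def t1)
    apply (simp only: t1' tr_add tr_sub matrix_transpose_mul sH sK transpose_transpose)
    apply (simp add: mld_sub mrd_sub mrd_add matrix_add_ldistrib matrix_mul_assoc algebra_simps)
    done
  qed
qed


lemma ftc_dot:
  assumes "in_Phi T H" "t \<in> {0..T}"
  shows "(dot T H has_integral (H T - H t)) {t..T}"
proof (rule fundamental_theorem_of_calculus)
  show "t \<le> T" using assms(2) by simp
  fix x assume x: "x \<in> {t..T}"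
  then have "x \<in> {0..T}" using assms(2) by auto
  then have "H differentiable (at x within {0..T})" using assms(1) by (auto simp: in_Phi_def)
  then have "(H has_vector_derivative dot T H x) (at x within {0..T})"
    unfolding dot_def by (simp add: vector_derivative_works[symmetric])
  then show "(H has_vector_derivative dot T H x) (at x within {t..T})"
    by (rule has_vector_derivative_within_subset) (use assms(2) in auto)
qed

lemma L2_good: "L2nu T \<nu> r \<Longrightarrow> t \<in> {0..T} \<Longrightarrow> good \<nu> (r t)"
  by (auto simp: L2nu_def good_def)

lemma hi_shift:
  assumes "(g has_integral (hb - ha)) S" "\<And>s. s \<in> S \<Longrightarrow> f' s = f s + g s"
  shows "(f' has_integral (X - ha - (G - hb))) S \<longleftrightarrow> (f has_integral (X - G)) S"
proof -
  have e: "(f' has_integral y) S \<longleftrightarrow> ((\<lambda>s. f s + g s) has_integral y) S" for y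
    by (rule has_integral_spike_eq[of "{}"]) (use assms(2) in auto)
  have v: "X - ha - (G - hb) = (X - G) + (hb - ha)" by (simp add: algebra_simps)
  show ?thesis
  proof
    assume "(f' has_integral (X - ha - (G - hb))) S"
    then have "((\<lambda>s. f s + g s) has_integral (X - G) + (hb - ha)) S" using e v by simp
    from has_integral_diff[OF this assms(1)] show "(f has_integral (X - G)) S" by simp
  next
    assume a: "(f has_integral (X - G)) S"
    have "((\<lambda>s. f s + g s) has_integral (X - G) + (hb - ha)) S" by (rule has_integral_add[OF a assms(1)])
    then show "(f' has_integral (X - ha - (G - hb))) S" unfolding e v .
  qed
qed

lemma key:
  fixes c :: "('n::finite,'m::finite) coef"
  assumes co: "coef_ok T \<nu> c" and pH: "in_Phi T H" and pK: "in_Phi T K"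
  shows "ric_sol \<nu> T c (weightHK \<nu> T c w H K) (\<lambda>t. P t - H t) (\<lambda>t. Pm t - K t) \<longleftrightarrow> ric_sol \<nu> T c w P Pm"
proof -
  have pw': "Sig0 \<nu> c (weightHK \<nu> T c w H K) t (P t - H t) = Sig0 \<nu> c w t (P t)"
     "Sig1 \<nu> c (weightHK \<nu> T c w H K) t (P t - H t) = Sig1 \<nu> c w t (P t)"
     "ricP \<nu> c (weightHK \<nu> T c w H K) t (P t - H t) = ricP \<nu> c w t (P t) + dot T H t"
     "ricPi \<nu> c (weightHK \<nu> T c w H K) t (P t - H t) (Pm t - K t) = ricPi \<nu> c w t (P t) (Pm t) + dot T K t"
    if t: "t \<in> {0..T}" for t
  proof -
    have g: "good \<nu> (cE c t)" "good \<nu> (cEb c t)" "good \<nu> (cF c t)" "good \<nu> (cFb c t)"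
      using co t by (auto simp: coef_ok_def intro: L2_good)
    have s: "transpose (H t) = H t" "transpose (K t) = K t"
      using pH pK t by (auto simp: in_Phi_def symm_def)
    show "Sig0 \<nu> c (weightHK \<nu> T c w H K) t (P t - H t) = Sig0 \<nu> c w t (P t)"
     "Sig1 \<nu> c (weightHK \<nu> T c w H K) t (P t - H t) = Sig1 \<nu> c w t (P t)"
     "ricP \<nu> c (weightHK \<nu> T c w H K) t (P t - H t) = ricP \<nu> c w t (P t) + dot T H t"
     "ricPi \<nu> c (weightHK \<nu> T c w H K) t (P t - H t) (Pm t - K t) = ricPi \<nu> c w t (P t) (Pm t) + dot T K t"
      using pw[where H=H and K=K and t=t and c=c and \<nu>=\<nu>, OF g s] by auto
  qed
  have sy: "symm (P t - H t) \<longleftrightarrow> symm (P t)" "symm (Pm t - K t) \<longleftrightarrow> symm (Pm t)"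
    if t: "t \<in> {0..T}" for t
    using pH pK t by (auto simp: in_Phi_def symm_def tr_sub)
  have G: "wG (weightHK \<nu> T c w H K) = wG w - H T"
    "wG (weightHK \<nu> T c w H K) + wGb (weightHK \<nu> T c w H K) = wG w + wGb w - K T"
    by (simp_all add: weightHK_def Let_def)
  have i1: "((\<lambda>s. ricP \<nu> c (weightHK \<nu> T c w H K) s (P s - H s)) has_integral (P t - H t - wG (weightHK \<nu> T c w H K))) {t..T}
     \<longleftrightarrow> ((\<lambda>s. ricP \<nu> c w s (P s)) has_integral (P t - wG w)) {t..T}"
    if t: "t \<in> {0..T}" for t
    unfolding G
    by (rule hi_shift[OF ftc_dot[OF pH t]]) (use t pw' in auto)
  have i2: "((\<lambda>s. ricPi \<nu> c (weightHK \<nu> T c w H K) s (P s - H s) (Pm s - K s)) has_integral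
        (Pm t - K t - (wG (weightHK \<nu> T c w H K) + wGb (weightHK \<nu> T c w H K)))) {t..T}
     \<longleftrightarrow> ((\<lambda>s. ricPi \<nu> c w s (P s) (Pm s)) has_integral (Pm t - (wG w + wGb w))) {t..T}"
    if t: "t \<in> {0..T}" for t
    unfolding G(2)
    by (rule hi_shift[OF ftc_dot[OF pK t]]) (use t pw' in auto)
  show ?thesis
    unfolding ric_sol_def using sy pw' i1 i2 by auto
qed

lemma key2:
  fixes c :: "('n::finite,'m::finite) coef"
  assumes co: "coef_ok T \<nu> c" and pH: "in_Phi T H" and pK: "in_Phi T K"
  shows "ric_sol \<nu> T c (weightHK \<nu> T c w H K) P' Pm' \<longleftrightarrow>
     ric_sol \<nu> T c w (\<lambda>t. P' t + H t) (\<lambda>t. Pm' t + K t)"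
  using key[OF assms, of w "\<lambda>t. P' t + H t" "\<lambda>t. Pm' t + K t"] by simp

theorem lemma4p2:
  fixes T :: real and \<Theta> :: "real set" and \<nu> :: "real measure"
    and c :: "('n::finite, 'm::finite) coef" and w :: "('n, 'm) weight"
    and H K :: "real \<Rightarrow> real^'n^'n"
  assumes "T > 0" and "levy_ok \<Theta> \<nu>"
    and "coef_ok T \<nu> c" and "weight_ok T w"
    and "in_Phi T H" and "in_Phi T K"
  shows "(ric_solvable \<nu> T c (weightHK \<nu> T c w H K) \<longleftrightarrow> ric_solvable \<nu> T c w) \<and>
         (ric_unique \<nu> T c (weightHK \<nu> T c w H K) \<longleftrightarrow> ric_unique \<nu> T c w)"
proof
  note k = key[OF assms(3,5,6)] and k2 = key2[OF assms(3,5,6)]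
  show "ric_solvable \<nu> T c (weightHK \<nu> T c w H K) \<longleftrightarrow> ric_solvable \<nu> T c w"
    unfolding ric_solvable_def using k k2 by blast
  show "ric_unique \<nu> T c (weightHK \<nu> T c w H K) \<longleftrightarrow> ric_unique \<nu> T c w"
  proof
    assume u: "ric_unique \<nu> T c (weightHK \<nu> T c w H K)"
    show "ric_unique \<nu> T c w" unfolding ric_unique_def
    proof (intro allI impI ballI)
      fix P Pm P1 Pm1 t assume h: "ric_sol \<nu> T c w P Pm \<and> ric_sol \<nu> T c w P1 Pm1" and t: "t \<in> {0..T}"
      have "ric_sol \<nu> T c (weightHK \<nu> T c w H K) (\<lambda>t. P t - H t) (\<lambda>t. Pm t - K t)"
           "ric_sol \<nu> T c (weightHK \<nu> T c w H K) (\<lambda>t. P1 t - H t) (\<lambda>t. Pm1 t - K t)"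
        using h k by auto
      with u t have "P t - H t = P1 t - H t \<and> Pm t - K t = Pm1 t - K t"
        unfolding ric_unique_def by blast
      then show "P t = P1 t \<and> Pm t = Pm1 t" by simp
    qed
  next
    assume u: "ric_unique \<nu> T c w"
    show "ric_unique \<nu> T c (weightHK \<nu> T c w H K)" unfolding ric_unique_def
    proof (intro allI impI ballI)
      fix P Pm P1 Pm1 t assume h: "ric_sol \<nu> T c (weightHK \<nu> T c w H K) P Pm \<and> ric_sol \<nu> T c (weightHK \<nu> T c w H K) P1 Pm1" and t: "t \<in> {0..T}"
      have "ric_sol \<nu> T c w (\<lambda>t. P t + H t) (\<lambda>t. Pm t + K t)"
           "ric_sol \<nu> T c w (\<lambda>t. P1 t + H t) (\<lambda>t. Pm1 t + K t)"
        using h k2 by auto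
      with u t have "P t + H t = P1 t + H t \<and> Pm t + K t = Pm1 t + K t"
        unfolding ric_unique_def by blast
      then show "P t = P1 t \<and> Pm t = Pm1 t" by simp
    qed
  qed
qed

end
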